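(* Let $\mathfrak{H}$ be a Euclidean space and let $(\mathcal{X},\mathsf{S},\gamma,(\Lambda_{a})_{a\in\mathcal{A}})$ be a spectral decomposition system for $\mathfrak{H}$ such that the set $\{\Lambda_a\}_{a\in\mathcal{A}}$ is closed in $\mathscr{L}(\mathcal{X},\mathfrak{H})$, and suppose in addition that $\mathsf{S}$ is a finite group. Then for all $X,Y\in\mathfrak{H}$, \[ \gamma(X+Y)-\gamma(X)\in\operatorname{conv}\bigl(\mathsf{S}\cdot\gamma(Y)\bigr), \] where $\mathsf{S}\cdot z=\{\mathsf{s}\cdot z:\mathsf{s}\in\mathsf{S}\}$.
   Context: A Euclidean space is a finite-dimensional real Hilbert space; $\mathscr{L}(\mathcal{X},\mathfrak{H})$ carries the operator-norm topology. A spectral decomposition system for a Euclidean space $\mathfrak{H}$ is a tuple $(\mathcal{X},\mathsf{S},\gamma,(\Lambda_a)_{a\in\mathcal{A}})$ where $\mathcal{X}$ is a Euclidean space, $\mathsf{S}$ is a group acting on $\mathcal{X}$ such that each map $x\mapsto \mathsf{s}\cdot x$ is a linear isometry, $\gamma\colon\mathfrak{H}\to\mathcal{X}$ is a mapping, and each $\Lambda_a\colon\mathcal{X}\to\mathfrak{H}$ is a linear isometry, such that: [A] there exists a mapping $\tau\colon\mathcal{X}\to\mathcal{X}$ with $\tau(\mathsf{s}\cdot x)=\tau(x)$ for all $\mathsf{s},x$, $\tau(x)\in\mathsf{S}\cdot x$ for all $x$, and $\gamma\circ\Lambda_a=\tau$ for all $a\in\mathcal{A}$; [B] for every $X\in\mathfrak{H}$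 there exists $a\in\mathcal{A}$ with $X=\Lambda_a\gamma(X)$; [C] $\langle X,Y\rangle\le\langle\gamma(X),\gamma(Y)\rangle$ for all $X,Y\in\mathfrak{H}$. *)

theory Defs
  imports "HOL-Analysis.Analysis" "HOL-Algebra.Group"
begin

definition isometric_linear_action :: "('g, 'm) monoid_scheme \<Rightarrow> ('g \<Rightarrow> 'x::euclidean_space \<Rightarrow> 'x) \<Rightarrow> bool" where
  "isometric_linear_action G act \<longleftrightarrow>
     group G \<and>
     (\<forall>x. act \<one>\<^bsub>G\<^esub> x = x) \<and>
     (\<forall>s\<in>carrier G. \<forall>t\<in>carrier G. \<forall>x. act (s \<otimes>\<^bsub>G\<^esub> t) x = act s (act t x)) \<and>
     (\<forall>s\<in>carrier G. linear (act s) \<and> (\<forall>x. norm (act s x) = norm x))"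

definition orbit :: "('g, 'm) monoid_scheme \<Rightarrow> ('g \<Rightarrow> 'x \<Rightarrow> 'x) \<Rightarrow> 'x \<Rightarrow> 'x set" where
  "orbit G act x = (\<lambda>s. act s x) ` carrier G"

definition spectral_decomposition_system ::
  "('g, 'm) monoid_scheme \<Rightarrow> ('g \<Rightarrow> 'x::euclidean_space \<Rightarrow> 'x) \<Rightarrow> ('h::euclidean_space \<Rightarrow> 'x)
    \<Rightarrow> 'a set \<Rightarrow> ('a \<Rightarrow> ('x \<Rightarrow>\<^sub>L 'h)) \<Rightarrow> bool" where
  "spectral_decomposition_system G act \<gamma> A \<Lambda> \<longleftrightarrow>
     isometric_linear_action G act \<and>
     (\<forall>a\<in>A. \<forall>x. norm (blinfun_apply (\<Lambda> a) x) = norm x) \<and>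
     (\<exists>\<tau>::'x \<Rightarrow> 'x.
        (\<forall>s\<in>carrier G. \<forall>x. \<tau> (act s x) = \<tau> x) \<and>
        (\<forall>x. \<tau> x \<in> orbit G act x) \<and>
        (\<forall>a\<in>A. \<gamma> \<circ> blinfun_apply (\<Lambda> a) = \<tau>)) \<and>
     (\<forall>X. \<exists>a\<in>A. X = blinfun_apply (\<Lambda> a) (\<gamma> X)) \<and>
     (\<forall>X Y. inner X Y \<le> inner (\<gamma> X) (\<gamma> Y))"

end

theory Submission
  imports Defs
begin

lemma iso_inner:
  assumes "linear f" "\<And>x. norm (f x) = norm x"
  shows "inner (f x) (f y) = inner x y"
proof -
  have "f (x + y) = f x + f y" using assms(1) by (simp add: linear_add)
  then show ?thesis by (metis dot_norm assms(2))
qed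

lemma riemann_bound:
  fixes f q :: "real \<Rightarrow> real"
  assumes sub: "\<And>t t'. f t' \<ge> f t + (t' - t) * q t"
    and qb: "\<And>t. \<bar>q t\<bar> \<le> c"
    and N: "N > (0::nat)"
  shows "0 \<le> f 1 - f 0 - (\<Sum>k<N. q (real k / real N)) / real N"
    and "f 1 - f 0 - (\<Sum>k<N. q (real k / real N)) / real N \<le> 2 * c / real N"
proof -
  define F where "F k = f (real k / real N)" for k
  define Q where "Q k = q (real k / real N)" for k
  have tel: "f 1 - f 0 = (\<Sum>k<N. F (Suc k) - F k)"
  proof -
    have "(\<Sum>k<N. F (Suc k) - F k) = F N - F 0" by (rule sum_lessThan_telescope)
    then show ?thesis using N by (simp add: F_def)
  qed
  have lo: "F (Suc k) - F k \<ge> Q k / real N" for k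
    using sub[of "real k / real N" "real (Suc k) / real N"] N
    by (simp add: F_def Q_def field_simps)
  have hi: "F (Suc k) - F k \<le> Q (Suc k) / real N" for k
    using sub[of "real (Suc k) / real N" "real k / real N"] N
    by (simp add: F_def Q_def field_simps)
  have s1: "(\<Sum>k<N. Q k / real N) \<le> (\<Sum>k<N. F (Suc k) - F k)"
    by (rule sum_mono) (use lo in auto)
  have s2: "(\<Sum>k<N. F (Suc k) - F k) \<le> (\<Sum>k<N. Q (Suc k) / real N)"
    by (rule sum_mono) (use hi in auto)
  have s3: "(\<Sum>k<N. Q (Suc k) / real N) = (\<Sum>k<N. Q k / real N) + (Q N - Q 0) / real N"
  proof -
    have "(\<Sum>k<N. Q (Suc k) / real N) - (\<Sum>k<N. Q k / real N) = (\<Sum>k<N. Q (Suc k) / real N - Q k / real N)"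
      by (simp add: sum_subtractf)
    also have "\<dots> = Q N / real N - Q 0 / real N"
      by (rule sum_lessThan_telescope[where f = "\<lambda>k. Q k / real N"])
    finally show ?thesis by (simp add: diff_divide_distrib)
  qed
  have s4: "(\<Sum>k<N. Q k / real N) = (\<Sum>k<N. q (real k / real N)) / real N"
    by (simp add: Q_def sum_divide_distrib)
  have "Q N - Q 0 \<le> 2 * c" using qb[of "real N / real N"] qb[of "real 0 / real N"]
    unfolding Q_def by linarith
  then have "(Q N - Q 0) / real N \<le> 2 * c / real N" using N by (simp add: divide_right_mono)
  then show "0 \<le> f 1 - f 0 - (\<Sum>k<N. q (real k / real N)) / real N"
    and "f 1 - f 0 - (\<Sum>k<N. q (real k / real N)) / real N \<le> 2 * c / real N"
    using s1 s2 s3 s4 tel by linarith+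
qed

theorem theorem5p1:
  fixes G :: "('g, 'm) monoid_scheme"
    and act :: "'g \<Rightarrow> 'x::euclidean_space \<Rightarrow> 'x"
    and \<gamma> :: "'h::euclidean_space \<Rightarrow> 'x"
    and A :: "'a set"
    and \<Lambda> :: "'a \<Rightarrow> ('x \<Rightarrow>\<^sub>L 'h)"
  assumes "spectral_decomposition_system G act \<gamma> A \<Lambda>"
    and "closed (\<Lambda> ` A)"
    and "finite (carrier G)"
  shows "\<forall>X Y. \<gamma> (X + Y) - \<gamma> X \<in> convex hull (orbit G act (\<gamma> Y))"
proof -
  note sds = assms(1)[unfolded spectral_decomposition_system_def isometric_linear_action_def]
  have grp: "group G" using sds by blast
  have act_one: "\<And>x. act \<one>\<^bsub>G\<^esub> x = x" using sds by blast
  have act_mult: "\<And>s t x. s \<in> carrier G \<Longrightarrow> t \<in> carrier G \<Longrightarrow> act (s \<otimes>\<^bsub>G\<^esub> t) x = act s (act t x)"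
    using sds by blast
  have act_lin: "\<And>s. s \<in> carrier G \<Longrightarrow> linear (act s)" using sds by blast
  have act_norm: "\<And>s x. s \<in> carrier G \<Longrightarrow> norm (act s x) = norm x" using sds by blast
  have Lnorm: "\<And>a x. a \<in> A \<Longrightarrow> norm (\<Lambda> a x) = norm x" using sds by blast
  have "\<exists>\<tau>::'x\<Rightarrow>'x. (\<forall>s\<in>carrier G. \<forall>x. \<tau> (act s x) = \<tau> x) \<and> (\<forall>x. \<tau> x \<in> orbit G act x) \<and> (\<forall>a\<in>A. \<gamma> \<circ> blinfun_apply (\<Lambda> a) = \<tau>)"
    using sds by blast
  then obtain \<tau> :: "'x \<Rightarrow> 'x" where
    tinv: "\<And>s x. s \<in> carrier G \<Longrightarrow> \<tau> (act s x) = \<tau> x" and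
    torb: "\<And>x. \<tau> x \<in> orbit G act x" and
    tcomp: "\<And>a. a \<in> A \<Longrightarrow> \<gamma> \<circ> blinfun_apply (\<Lambda> a) = \<tau>"
    by blast
  have dec: "\<And>X. \<exists>a\<in>A. X = \<Lambda> a (\<gamma> X)" using sds by blast
  have ineq: "\<And>X Y. inner X Y \<le> inner (\<gamma> X) (\<gamma> Y)" using sds by blast
  have gL: "\<And>a u. a \<in> A \<Longrightarrow> \<gamma> (\<Lambda> a u) = \<tau> u"
  proof -
    fix a u assume "a \<in> A"
    from fun_cong[OF tcomp[OF this], of u] show "\<gamma> (\<Lambda> a u) = \<tau> u" by simp
  qed
  have act_inner: "inner (act s x) (act s y) = inner x y" if "s \<in> carrier G" for s x y
    by (rule iso_inner[of "act s", OF act_lin[OF that] act_norm[OF that]])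
  have L_inner: "\<And>a x y. a \<in> A \<Longrightarrow> inner (\<Lambda> a x) (\<Lambda> a y) = inner x y"
    by (rule iso_inner) (auto simp: Lnorm bounded_linear.linear[OF blinfun.bounded_linear_right])
  define C where "C = {u. \<tau> u = u}"
  have tC: "\<tau> w \<in> C" for w
  proof -
    obtain s where "s \<in> carrier G" "\<tau> w = act s w" using torb[of w] unfolding orbit_def by auto
    then have "\<tau> (\<tau> w) = \<tau> w" using tinv by simp
    then show ?thesis unfolding C_def by simp
  qed
  have wrep: "\<exists>s\<in>carrier G. w = act s (\<tau> w)" for w
  proof -
    obtain s where s: "s \<in> carrier G" "\<tau> w = act s w" using torb[of w] unfolding orbit_def by auto
    have "act (inv\<^bsub>G\<^esub> s) (\<tau> w) = w"
      using s grp by (simp add: act_mult[symmetric] group.l_inv group.inv_closed act_one)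
    moreover have "inv\<^bsub>G\<^esub> s \<in> carrier G" using s grp by (simp add: group.inv_closed)
    ultimately show ?thesis by (intro bexI[of _ "inv\<^bsub>G\<^esub> s"]) auto
  qed
  have spanC: "span C = UNIV"
  proof (rule ccontr)
    assume ne: "span C \<noteq> UNIV"
    have "dim C \<noteq> DIM('x)" using ne dim_eq_full[of C] by auto
    then have dimC: "dim C < DIM('x)" using dim_subset_UNIV[of C] by linarith
    have negl: "negligible (act s ` span C)" if "s \<in> carrier G" for s
    proof (rule negligible_lowdim)
      have "dim (act s ` span C) \<le> dim (span C)" by (rule dim_image_le[OF act_lin[OF that]])
      then show "dim (act s ` span C) < DIM('x)" using dimC by simp
    qed
    have "UNIV \<subseteq> \<Union> ((\<lambda>s. act s ` span C) ` carrier G)"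
    proof
      fix w :: 'x
      obtain s where "s \<in> carrier G" "w = act s (\<tau> w)" using wrep by blast
      moreover have "\<tau> w \<in> span C" using tC span_base by blast
      ultimately show "w \<in> \<Union> ((\<lambda>s. act s ` span C) ` carrier G)" by blast
    qed
    moreover have "negligible (\<Union> ((\<lambda>s. act s ` span C) ` carrier G))"
      by (intro negligible_Union) (auto simp: assms(3) negl)
    ultimately have "negligible (UNIV::'x set)" by (rule negligible_subset[rotated])
    then show False by simp
  qed
  have K1: "\<And>u a Z. u \<in> C \<Longrightarrow> a \<in> A \<Longrightarrow> inner (\<Lambda> a u) Z \<le> inner u (\<gamma> Z)"
  proof -
    fix u a Z assume "u \<in> C" "a \<in> A"
    then have "\<tau> u = u" unfolding C_def by simp
    then show "inner (\<Lambda> a u) Z \<le> inner u (\<gamma> Z)" using ineq[of "\<Lambda> a u" Z] gL[OF \<open>a \<in> A\<close>, of u] by simp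
  qed
  show ?thesis
  proof (intro allI)
    fix X Y :: 'h
    define K where "K = convex hull (orbit G act (\<gamma> Y))"
    define d where "d = \<gamma> (X + Y) - \<gamma> X"
    show "\<gamma> (X + Y) - \<gamma> X \<in> convex hull (orbit G act (\<gamma> Y))"
    proof (rule ccontr)
      assume "\<not> ?thesis"
      then have dK: "d \<notin> K" unfolding d_def K_def .
      have finO: "finite (orbit G act (\<gamma> Y))" unfolding orbit_def using assms(3) by simp
      have "convex K" "closed K" unfolding K_def
        by (auto intro: compact_imp_closed compact_convex_hull finite_imp_compact finO)
      then obtain a0 b0 where ab: "inner a0 d < b0" "\<forall>x\<in>K. inner a0 x > b0"
        using separating_hyperplane_closed_point dK by blast
      define w where "w = - a0"
      define b where "b = - b0"
      have wd: "inner w d > b" using ab by (simp add: w_def b_def)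
      have wK: "\<And>x. x \<in> orbit G act (\<gamma> Y) \<Longrightarrow> inner w x < b"
        using ab hull_subset unfolding K_def w_def b_def by fastforce
      have P1: "inner (\<Lambda> a w) Y \<le> b" if "a \<in> A" for a
      proof -
        obtain s where s: "s \<in> carrier G" "\<tau> w = act s w" using torb[of w] unfolding orbit_def by auto
        define z where "z = act (inv\<^bsub>G\<^esub> s) (\<gamma> Y)"
        have zO: "z \<in> orbit G act (\<gamma> Y)" unfolding z_def orbit_def using s grp by (simp add: group.inv_closed)
        have "act s z = \<gamma> Y" unfolding z_def
          using s grp by (simp add: act_mult[symmetric] group.r_inv group.inv_closed act_one)
        have "inner (\<Lambda> a w) Y \<le> inner (\<tau> w) (\<gamma> Y)" using ineq[of "\<Lambda> a w" Y] gL[OF that, of w] by simp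
        also have "\<dots> = inner (act s w) (act s z)" using s \<open>act s z = \<gamma> Y\<close> by simp
        also have "\<dots> = inner w z" using act_inner s by simp
        also have "\<dots> < b" using wK zO by blast
        finally show ?thesis by simp
      qed
      have "\<forall>Z. \<exists>a. a \<in> A \<and> Z = \<Lambda> a (\<gamma> Z)" using dec by blast
      then have "\<exists>\<alpha>. \<forall>Z. \<alpha> Z \<in> A \<and> Z = \<Lambda> (\<alpha> Z) (\<gamma> Z)" by (rule choice)
      then obtain \<alpha> where \<alpha>: "\<And>Z. \<alpha> Z \<in> A" "\<And>Z. Z = \<Lambda> (\<alpha> Z) (\<gamma> Z)" by blast
      define p where "p t u = inner (\<Lambda> (\<alpha> (X + t *\<^sub>R Y)) u) Y" for t u
      have sub: "inner u (\<gamma> (X + t' *\<^sub>R Y)) \<ge> inner u (\<gamma> (X + t *\<^sub>R Y)) + (t' - t) * p t u"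
        if "u \<in> C" for u t t'
      proof -
        define Z where "Z = X + t *\<^sub>R Y"
        define a where "a = \<alpha> Z"
        have aA: "a \<in> A" and Za: "Z = \<Lambda> a (\<gamma> Z)" using \<alpha> unfolding a_def by auto
        have e: "X + t' *\<^sub>R Y = Z + (t' - t) *\<^sub>R Y" unfolding Z_def by (simp add: algebra_simps)
        have i1: "inner u (\<gamma> (X + t' *\<^sub>R Y)) \<ge> inner (\<Lambda> a u) (X + t' *\<^sub>R Y)" using K1[OF that aA] .
        have i2: "inner (\<Lambda> a u) (X + t' *\<^sub>R Y) = inner (\<Lambda> a u) Z + (t' - t) * inner (\<Lambda> a u) Y"
          unfolding e by (simp add: inner_add_right)
        have i3: "inner (\<Lambda> a u) Z = inner u (\<gamma> Z)"
        proof -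
          have "inner (\<Lambda> a u) Z = inner (\<Lambda> a u) (\<Lambda> a (\<gamma> Z))" using Za by simp
          also have "\<dots> = inner u (\<gamma> Z)" by (rule L_inner[OF aA])
          finally show ?thesis .
        qed
        have "p t u = inner (\<Lambda> a u) Y" unfolding p_def a_def Z_def ..
        then show ?thesis using i1 i2 i3 unfolding Z_def by simp
      qed
      have pb: "\<bar>p t u\<bar> \<le> norm u * norm Y" for t u
      proof -
        have "\<bar>p t u\<bar> \<le> norm (\<Lambda> (\<alpha> (X + t *\<^sub>R Y)) u) * norm Y"
          unfolding p_def by (rule Cauchy_Schwarz_ineq2)
        also have "\<dots> = norm u * norm Y" using Lnorm[OF \<alpha>(1)] by simp
        finally show ?thesis .
      qed
      define R where "R N u = inner u d - (\<Sum>k<N. p (real k / real N) u) / real N" for N u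
      have Rb: "0 \<le> R N u \<and> R N u \<le> 2 * (norm u * norm Y) / real N" if "u \<in> C" "N > 0" for N u
      proof -
        have f1: "inner u (\<gamma> (X + 1 *\<^sub>R Y)) - inner u (\<gamma> (X + 0 *\<^sub>R Y)) = inner u d"
          unfolding d_def by (simp add: inner_diff_right)
        have AA: "\<And>t t'. inner u (\<gamma> (X + t' *\<^sub>R Y)) \<ge> inner u (\<gamma> (X + t *\<^sub>R Y)) + (t' - t) * p t u"
          using sub[OF that(1)] by blast
        note r1 = riemann_bound(1)[where f="\<lambda>t. inner u (\<gamma> (X + t *\<^sub>R Y))" and q="\<lambda>t. p t u", OF AA pb that(2)]
        note r2 = riemann_bound(2)[where f="\<lambda>t. inner u (\<gamma> (X + t *\<^sub>R Y))" and q="\<lambda>t. p t u", OF AA pb that(2)]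
        have "0 \<le> inner u d - (\<Sum>k<N. p (real k / real N) u) / real N"
          using r1 f1 by simp
        moreover have "inner u d - (\<Sum>k<N. p (real k / real N) u) / real N \<le> 2 * (norm u * norm Y) / real N"
          using r2 f1 by simp
        ultimately show ?thesis unfolding R_def by simp
      qed
      have "w \<in> span C" using spanC by simp
      then obtain T c where T: "finite T" "T \<subseteq> C" and wT: "w = (\<Sum>v\<in>T. c v *\<^sub>R v)"
        unfolding span_explicit by blast
      have plin: "p t w = (\<Sum>v\<in>T. c v * p t v)" for t
      proof -
        have lin: "linear (blinfun_apply (\<Lambda> (\<alpha> (X + t *\<^sub>R Y))))"
          by (rule bounded_linear.linear[OF blinfun.bounded_linear_right])
        show ?thesis unfolding p_def wT
          by (simp add: linear_sum[OF lin] linear_scale[OF lin] inner_sum_left)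
      qed
      have dlin: "inner w d = (\<Sum>v\<in>T. c v * inner v d)" unfolding wT by (simp add: inner_sum_left)
      have Rlin: "R N w = (\<Sum>v\<in>T. c v * R N v)" for N
      proof -
        have "(\<Sum>k<N. p (real k / real N) w) = (\<Sum>k<N. \<Sum>v\<in>T. c v * p (real k / real N) v)"
          by (simp add: plin)
        also have "\<dots> = (\<Sum>v\<in>T. \<Sum>k<N. c v * p (real k / real N) v)" by (rule sum.swap)
        also have "\<dots> = (\<Sum>v\<in>T. c v * (\<Sum>k<N. p (real k / real N) v))" by (simp add: sum_distrib_left)
        finally have e: "(\<Sum>k<N. p (real k / real N) w) = (\<Sum>v\<in>T. c v * (\<Sum>k<N. p (real k / real N) v))" .
        have "R N w = (\<Sum>v\<in>T. c v * inner v d) - (\<Sum>v\<in>T. c v * (\<Sum>k<N. p (real k / real N) v)) / real N"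
          unfolding R_def dlin e ..
        also have "\<dots> = (\<Sum>v\<in>T. c v * inner v d - c v * (\<Sum>k<N. p (real k / real N) v) / real N)"
          by (simp add: sum_subtractf sum_divide_distrib)
        also have "\<dots> = (\<Sum>v\<in>T. c v * R N v)"
          unfolding R_def by (simp add: right_diff_distrib)
        finally show ?thesis .
      qed
      define B where "B = (\<Sum>v\<in>T. \<bar>c v\<bar> * (2 * (norm v * norm Y)))"
      have main: "inner w d \<le> b + B / real N" if Np: "N > 0" for N
      proof -
        have s1: "(\<Sum>k<N. p (real k / real N) w) \<le> of_nat (card {..<N}) * b"
          by (rule sum_bounded_above) (simp add: p_def P1 \<alpha>(1))
        then have s1': "(\<Sum>k<N. p (real k / real N) w) / real N \<le> b"
          using Np by (simp add: divide_le_eq mult.commute)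
        have s2: "c v * R N v \<le> \<bar>c v\<bar> * (2 * (norm v * norm Y)) / real N" if "v \<in> T" for v
        proof -
          have r0: "0 \<le> R N v" and rb: "R N v \<le> 2 * (norm v * norm Y) / real N"
            using Rb[of v N] T that Np by auto
          have "c v * R N v \<le> \<bar>c v\<bar> * R N v" using r0 by (simp add: mult_right_mono)
          also have "\<dots> \<le> \<bar>c v\<bar> * (2 * (norm v * norm Y) / real N)"
            by (rule mult_left_mono) (use rb in auto)
          finally show ?thesis by simp
        qed
        have "R N w \<le> B / real N" unfolding Rlin B_def sum_divide_distrib
          by (rule sum_mono) (use s2 in auto)
        moreover have "inner w d = (\<Sum>k<N. p (real k / real N) w) / real N + R N w" unfolding R_def by simp
        ultimately show ?thesis using s1' by linarith
      qed
      define e where "e = inner w d - b"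
      have epos: "e > 0" using wd unfolding e_def by simp
      obtain N :: nat where N: "B / e < real N" using reals_Archimedean2 by blast
      have "B / e < real (Suc N)" using N by simp
      then have "B < real (Suc N) * e" using epos by (simp add: pos_divide_less_eq)
      then have "B / real (Suc N) < e" by (simp add: pos_divide_less_eq mult.commute)
      then show False using main[of "Suc N"] unfolding e_def by linarith
    qed
  qed
qed

end
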